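(* Let $\mathcal H$ be a regular unitarily invariant space and let $\mathfrak a$ be a weak-$*$ closed prime ideal of $\mathcal M(\mathcal H)$. If $\mathcal Z_{\mathbb B_d}(\mathfrak a)$ has positive dimension as a complex analytic variety, then $\operatorname{Loc}(\mathfrak a)$ is empty.
   Context: A regular unitarily invariant space: a reproducing kernel Hilbert space $\mathcal H$ of holomorphic functions on $\mathbb B_d$ with kernel $K(z,w)=1+\sum_{n\ge1}a_n\langle z,w\rangle^n$, $a_n>0$, $a_n/a_{n+1}\to1$, having the complete Nevanlinna–Pick property. $\mathcal M(\mathcal H)$ is the multiplier algebra. $\mathcal Z_{\mathbb B_d}(\mathfrak a)=\{z\in\mathbb B_d: f(z)=0\ \forall f\in\mathfrak a\}$. $\operatorname{supp}(\mathfrak a)=\{z\in\mathbb C^d: 1\notin\mathfrak a+\sum_j(x_j-z_j)\mathcal M(\mathcal H)\}$. A weak-$*$ closed ideal $\mathfrak a$ is localizable at $z\in\mathbb C^d$ if for every $r>0$ there exist weak-$*$ closed ideals $\mathfrak b,\mathfrak c\subset\mathcal M(\mathcal H)$ with $\mathfrak c\not\subset\mathfrak a$, $\mathfrak b\mathfrak c\subset\mathfrak a$, and $\operatorname{supp}(\mathfrak a)\cap\operatorname{supp}(\mathfrak b)\subset B(z,r)$ (open ball of radius $r$ about $z$); $\operatorname{Loc}(\mathfrak a)$ is the set of such points. *)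

theory Defs
  imports "HOL-Analysis.Analysis"
begin

text \<open>Points of C^d are vectors of type complex^'n (d = CARD('n)); the open unit
ball B_d is ball 0 1 for the Euclidean norm.  Functions are of type
complex^'n => complex; only their values on B_d matter.  Elements of the
multiplier algebra are normalised to vanish off B_d.\<close>

definition cinner :: "complex^'n \<Rightarrow> complex^'n \<Rightarrow> complex" where
  "cinner z w = (\<Sum>i\<in>UNIV. z$i * cnj (w$i))"

definition Bd :: "(complex^'n) set" where
  "Bd = ball 0 1"

text \<open>K(z,w) = 1 + sum_{n>=1} a_n <z,w>^n; the value a 0 is irrelevant.\<close>
definition kern :: "(nat \<Rightarrow> real) \<Rightarrow> complex^'n \<Rightarrow> complex^'n \<Rightarrow> complex" where
  "kern a z w = 1 + (\<Sum>n. complex_of_real (a (Suc n)) * cinner z w ^ Suc n)"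

definition psd_kernel :: "('x \<Rightarrow> 'x \<Rightarrow> complex) \<Rightarrow> 'x set \<Rightarrow> bool" where
  "psd_kernel k S \<longleftrightarrow>
     (\<forall>(xs :: 'x list) (c :: nat \<Rightarrow> complex). set xs \<subseteq> S \<longrightarrow>
        (let s = (\<Sum>i<length xs. \<Sum>j<length xs. cnj (c i) * c j * k (xs!i) (xs!j))
         in Im s = 0 \<and> Re s \<ge> 0))"

text \<open>Regular unitarily invariant space with the complete Nevanlinna-Pick property
(for the normalised kernel K: 1 - 1/K is positive semidefinite).\<close>
definition regular_ui :: "'n::finite itself \<Rightarrow> (nat \<Rightarrow> real) \<Rightarrow> bool" where
  "regular_ui (_ :: 'n::finite itself) a \<longleftrightarrow>
     (\<forall>n\<ge>1. a n > 0) \<and>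
     ((\<lambda>n. a (Suc n) / a (Suc (Suc n))) \<longlonglongrightarrow> 1) \<and>
     psd_kernel (\<lambda>z w. 1 - 1 / kern a z w) (Bd :: (complex^'n) set)"

text \<open>Membership in the RKHS H(K) (Aronszajn): f in H with norm <= c iff
c^2 K(z,w) - f(z) conj(f(w)) is a positive kernel on B_d.\<close>
definition in_H :: "(nat \<Rightarrow> real) \<Rightarrow> (complex^'n \<Rightarrow> complex) \<Rightarrow> bool" where
  "in_H a f \<longleftrightarrow>
     (\<exists>c\<ge>0. psd_kernel (\<lambda>z w. complex_of_real (c\<^sup>2) * kern a z w - f z * cnj (f w)) Bd)"

definition hnorm :: "(nat \<Rightarrow> real) \<Rightarrow> (complex^'n \<Rightarrow> complex) \<Rightarrow> real" where
  "hnorm a f = Inf {c. c \<ge> 0 \<and>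
     psd_kernel (\<lambda>z w. complex_of_real (c\<^sup>2) * kern a z w - f z * cnj (f w)) Bd}"

definition Mult :: "(nat \<Rightarrow> real) \<Rightarrow> (complex^'n \<Rightarrow> complex) set" where
  "Mult a = {\<phi>. (\<forall>f. in_H a f \<longrightarrow> in_H a (\<lambda>z. \<phi> z * f z)) \<and> (\<forall>z. z \<notin> Bd \<longrightarrow> \<phi> z = 0)}"

definition one_M :: "complex^'n \<Rightarrow> complex" where
  "one_M = (\<lambda>z. if z \<in> Bd then 1 else 0)"

definition mideal :: "(nat \<Rightarrow> real) \<Rightarrow> (complex^'n \<Rightarrow> complex) set \<Rightarrow> bool" where
  "mideal a I \<longleftrightarrow> I \<subseteq> Mult a \<and> (\<lambda>z. 0) \<in> I \<and>
     (\<forall>f\<in>I. \<forall>g\<in>I. (\<lambda>z. f z + g z) \<in> I) \<and>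
     (\<forall>f\<in>I. \<forall>g\<in>Mult a. (\<lambda>z. g z * f z) \<in> I)"

text \<open>Weak-* closedness (via Krein-Smulian and the agreement of the weak-* topology
with pointwise convergence on B_d on bounded subsets of M(H); balls are metrisable):
limits of pointwise convergent, multiplier-norm bounded sequences stay in I.\<close>
definition wstar_closed :: "(nat \<Rightarrow> real) \<Rightarrow> (complex^'n \<Rightarrow> complex) set \<Rightarrow> bool" where
  "wstar_closed a I \<longleftrightarrow>
     (\<forall>(\<phi> :: nat \<Rightarrow> complex^'n \<Rightarrow> complex) \<psi> (C::real).
        (\<forall>k. \<phi> k \<in> I) \<and>
        (\<forall>k f. in_H a f \<longrightarrow> hnorm a (\<lambda>z. \<phi> k z * f z) \<le> C * hnorm a f) \<and>
        (\<forall>z\<in>Bd. (\<lambda>k. \<phi> k z) \<longlonglongrightarrow> \<psi> z) \<and>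
        (\<forall>z. z \<notin> Bd \<longrightarrow> \<psi> z = 0)
        \<longrightarrow> \<psi> \<in> I)"

definition wstar_ideal :: "(nat \<Rightarrow> real) \<Rightarrow> (complex^'n \<Rightarrow> complex) set \<Rightarrow> bool" where
  "wstar_ideal a I \<longleftrightarrow> mideal a I \<and> wstar_closed a I"

definition prime_mideal :: "(nat \<Rightarrow> real) \<Rightarrow> (complex^'n \<Rightarrow> complex) set \<Rightarrow> bool" where
  "prime_mideal a I \<longleftrightarrow> mideal a I \<and> one_M \<notin> I \<and>
     (\<forall>f\<in>Mult a. \<forall>g\<in>Mult a. (\<lambda>z. f z * g z) \<in> I \<longrightarrow> f \<in> I \<or> g \<in> I)"

definition supp :: "(nat \<Rightarrow> real) \<Rightarrow> (complex^'n \<Rightarrow> complex) set \<Rightarrow> (complex^'n) set" where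
  "supp a I = {z. \<not> (\<exists>f\<in>I. \<exists>g :: 'n \<Rightarrow> complex^'n \<Rightarrow> complex. (\<forall>j. g j \<in> Mult a) \<and>
        (\<forall>w\<in>Bd. f w + (\<Sum>j\<in>UNIV. (w$j - z$j) * g j w) = 1))}"

definition ZB :: "(complex^'n \<Rightarrow> complex) set \<Rightarrow> (complex^'n) set" where
  "ZB I = {z\<in>Bd. \<forall>f\<in>I. f z = 0}"

definition Loc :: "(nat \<Rightarrow> real) \<Rightarrow> (complex^'n \<Rightarrow> complex) set \<Rightarrow> (complex^'n) set" where
  "Loc a I = {z. \<forall>r>0. \<exists>b c. wstar_ideal a b \<and> wstar_ideal a c \<and> \<not> c \<subseteq> I \<and>
       (\<forall>f\<in>b. \<forall>g\<in>c. (\<lambda>w. f w * g w) \<in> I) \<and>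
       supp a I \<inter> supp a b \<subseteq> ball z r}"

text \<open>An analytic subvariety V of B_d has positive dimension iff it is not discrete,
i.e. some point of V is an accumulation point of V.\<close>
definition pos_dim_variety :: "(complex^'n) set \<Rightarrow> bool" where
  "pos_dim_variety V \<longleftrightarrow> (\<exists>p\<in>V. p islimpt V)"

end

theory Submission
  imports Defs
begin

lemma ZB_supp:
  fixes I :: "(complex^'n \<Rightarrow> complex) set"
  shows "ZB I \<subseteq> supp a I"
proof
  fix w assume w: "w \<in> ZB I"
  have "\<not> (\<exists>f\<in>I. \<exists>g :: 'n \<Rightarrow> complex^'n \<Rightarrow> complex. (\<forall>j. g j \<in> Mult a) \<and>
        (\<forall>v\<in>Bd. f v + (\<Sum>j\<in>UNIV. (v$j - w$j) * g j v) = 1))"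
  proof
    assume "\<exists>f\<in>I. \<exists>g :: 'n \<Rightarrow> complex^'n \<Rightarrow> complex. (\<forall>j. g j \<in> Mult a) \<and>
        (\<forall>v\<in>Bd. f v + (\<Sum>j\<in>UNIV. (v$j - w$j) * g j v) = 1)"
    then obtain f and g :: "'n \<Rightarrow> complex^'n \<Rightarrow> complex" where f: "f \<in> I"
      and h: "\<forall>v\<in>Bd. f v + (\<Sum>j\<in>UNIV. (v$j - w$j) * g j v) = 1" by blast
    have "w \<in> Bd" "f w = 0" using w f by (auto simp: ZB_def)
    then have "f w + (\<Sum>j\<in>UNIV. (w$j - w$j) * g j w) = 1" using h by blast
    with \<open>f w = 0\<close> show False by simp
  qed
  then show "w \<in> supp a I" unfolding supp_def by blast
qed

lemma supp_anti: "B \<subseteq> I \<Longrightarrow> supp a I \<subseteq> supp a B"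
  unfolding supp_def by blast

theorem theorem4p4:
  fixes a :: "nat \<Rightarrow> real" and I :: "(complex^'n \<Rightarrow> complex) set"
  assumes "regular_ui TYPE('n) a"
    and "wstar_ideal a I"
    and "prime_mideal a I"
    and "pos_dim_variety (ZB I)"
  shows "Loc a I = {}"
proof (rule ccontr)
  assume "Loc a I \<noteq> {}"
  then obtain z where z: "z \<in> Loc a I" by blast
  obtain p where p: "p \<in> ZB I" "p islimpt ZB I"
    using assms(4) unfolding pos_dim_variety_def by blast
  obtain y where y: "y \<in> ZB I" "y \<noteq> p"
    using p(2) unfolding islimpt_def by (metis UNIV_I open_UNIV)
  have key: "supp a I \<subseteq> ball z r" if r: "r > 0" for r
  proof -
    obtain b c where bc: "wstar_ideal a b" "wstar_ideal a c" "\<not> c \<subseteq> I"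
      "\<forall>f\<in>b. \<forall>g\<in>c. (\<lambda>w. f w * g w) \<in> I" "supp a I \<inter> supp a b \<subseteq> ball z r"
      using z r unfolding Loc_def by blast
    obtain g where g: "g \<in> c" "g \<notin> I" using bc(3) by blast
    have gM: "g \<in> Mult a" using bc(2) g(1) unfolding wstar_ideal_def mideal_def by blast
    have "b \<subseteq> I"
    proof
      fix f assume f: "f \<in> b"
      have fM: "f \<in> Mult a" using bc(1) f unfolding wstar_ideal_def mideal_def by blast
      have "(\<lambda>w. f w * g w) \<in> I" using bc(4) f g(1) by blast
      then show "f \<in> I" using assms(3) fM gM g(2) unfolding prime_mideal_def by blast
    qed
    then have "supp a I \<subseteq> supp a b" by (rule supp_anti)
    with bc(5) show ?thesis by blast
  qed
  have eq: "q = z" if "q \<in> ZB I" for q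
  proof (rule ccontr)
    assume "q \<noteq> z"
    then have "dist z q > 0" by simp
    with key have "q \<in> ball z (dist z q)" using ZB_supp that by blast
    then show False by simp
  qed
  from eq[OF p(1)] eq[OF y(1)] y(2) show False by simp
qed

end
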